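(* Let $G$ be a group with a gliding system $(\mathcal{G},\mathcal{I})$ such that there is an upper bound on the cardinality of sets of pairwise independent glides. Let $\mathcal{D}\subset G$ be an oriented regular set satisfying the square condition. Then for every $A\in\mathcal{D}$ the typing homomorphism $\mu_A:\pi_1(X_{\mathcal{D}},A)\to\mathcal{A}(G)$ is injective.
   Context: Gliding system $(\mathcal{G},\mathcal{I})$ in $G$: $\mathcal{G}\subset G\setminus\{1\}$ closed under inversion (glides), $\mathcal{I}\subset\mathcal{G}\times\mathcal{G}$ (independence) with $(s^{-1},t),(t,s)\in\mathcal{I}$ and $st=ts\ne1$ whenever $(s,t)\in\mathcal{I}$. Pre-cubic set: finite set $S$ of pairwise independent glides, $[S]=\prod_{s\in S}s$; cubic: pre-cubic with $[T_1]\ne[T_2]$ for distinct $T_1,T_2\subset S$. Glide complex $X_G$: cubed complex with one $k$-cube for each equivalence class of based cubes $(A,S)$ ($A\in G$, $S$ cubic of size $k$) under $(A,S)\sim([T]A,(S\setminus T)\cup\{t^{-1}:t\in T\})$; vertices $[T]A$, faces the cubes of $(A,S')$, $S'\subset S$; in particular 1-cells join $A$ and $sA$ for glides $s$. $X_{\mathcal{D}}$: subcomplex of cubes all of whose vertices lie in $\mathcal{D}$. $\mathcal{D}$ is regular if for every $A\in\mathcal{D}$ every pre-cubic $S$ with $sA\in\mathcal{D}$ ($s\in S$) and $stA\in\mathcal{D}$ (distinct $s,t\in S$) is cubic. Square condition: for $A\in\mathcal{D}$ and independent $s,t$ with $sA,tA\in\mathcal{D}$, $stA\in\mathcal{D}$.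 $\mathcal{A}(G)$ is the right-angled Artin group with generators $g_s$ ($s\in\mathcal{G}$) and relations $g_sg_t=g_tg_s$ for $(s,t)\in\mathcal{I}$. An orientation of $\mathcal{D}$ is a choice of direction of every 1-cell of $X_{\mathcal{D}}$ such that for every square with vertices $A,sA,tA,stA\in\mathcal{D}$ ($s,t$ independent), the 1-cells $A$–$sA$ and $tA$–$stA$ are either both directed towards $sA,stA$ or both towards $A,tA$ (and the same with $s,t$ exchanged); $\mathcal{D}$ is oriented if an orientation is fixed. For a 1-cell $e$ directed from $A$ to $B$ set $|e|=BA^{-1}\in\mathcal{G}$. For an edge path $\alpha$ through consecutive 1-cells $e_1,\dots,e_n$, with $\nu_k=+1$ if the path traverses $e_k$ along its orientation and $-1$ otherwise, put $\mu(\alpha)=g_{|e_1|}^{\nu_1}\cdots g_{|e_n|}^{\nu_n}$; this is invariant under homotopy rel endpoints and defines the typing homomorphism $\mu_A:\pi_1(X_{\mathcal{D}},A)\to\mathcal{A}(G)$. *)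

theory Defs
  imports "HOL-Algebra.Group"
begin

definition gliding_system :: "('a, 'b) monoid_scheme \<Rightarrow> 'a set \<Rightarrow> ('a \<times> 'a) set \<Rightarrow> bool" where
  "gliding_system G gl ind \<longleftrightarrow>
     gl \<subseteq> carrier G - {\<one>\<^bsub>G\<^esub>} \<and>
     (\<forall>s\<in>gl. inv\<^bsub>G\<^esub> s \<in> gl) \<and>
     ind \<subseteq> gl \<times> gl \<and>
     (\<forall>s t. (s, t) \<in> ind \<longrightarrow>
        (inv\<^bsub>G\<^esub> s, t) \<in> ind \<and> (t, s) \<in> ind \<and>
        s \<otimes>\<^bsub>G\<^esub> t = t \<otimes>\<^bsub>G\<^esub> s \<and> s \<otimes>\<^bsub>G\<^esub> t \<noteq> \<one>\<^bsub>G\<^esub>)"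

definition pairwise_indep :: "('a \<times> 'a) set \<Rightarrow> 'a set \<Rightarrow> bool" where
  "pairwise_indep ind S \<longleftrightarrow> (\<forall>s\<in>S. \<forall>t\<in>S. s \<noteq> t \<longrightarrow> (s, t) \<in> ind)"

definition precubic :: "'a set \<Rightarrow> ('a \<times> 'a) set \<Rightarrow> 'a set \<Rightarrow> bool" where
  "precubic gl ind S \<longleftrightarrow> finite S \<and> S \<subseteq> gl \<and> pairwise_indep ind S"

definition list_prod :: "('a, 'b) monoid_scheme \<Rightarrow> 'a list \<Rightarrow> 'a" where
  "list_prod G xs = foldr (\<lambda>x y. x \<otimes>\<^bsub>G\<^esub> y) xs \<one>\<^bsub>G\<^esub>"

text \<open>[S], the product of the (pairwise commuting) elements of a finite set S.\<close>
definition bracket :: "('a, 'b) monoid_scheme \<Rightarrow> 'a set \<Rightarrow> 'a" where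
  "bracket G S = list_prod G (SOME xs. distinct xs \<and> set xs = S)"

definition cubic :: "('a, 'b) monoid_scheme \<Rightarrow> 'a set \<Rightarrow> ('a \<times> 'a) set \<Rightarrow> 'a set \<Rightarrow> bool" where
  "cubic G gl ind S \<longleftrightarrow> precubic gl ind S \<and>
     (\<forall>T1 T2. T1 \<subseteq> S \<and> T2 \<subseteq> S \<and> T1 \<noteq> T2 \<longrightarrow> bracket G T1 \<noteq> bracket G T2)"

definition regular_set :: "('a, 'b) monoid_scheme \<Rightarrow> 'a set \<Rightarrow> ('a \<times> 'a) set \<Rightarrow> 'a set \<Rightarrow> bool" where
  "regular_set G gl ind D \<longleftrightarrow>
     (\<forall>A\<in>D. \<forall>S. precubic gl ind S \<and> (\<forall>s\<in>S. s \<otimes>\<^bsub>G\<^esub> A \<in> D) \<and>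
        (\<forall>s\<in>S. \<forall>t\<in>S. s \<noteq> t \<longrightarrow> s \<otimes>\<^bsub>G\<^esub> t \<otimes>\<^bsub>G\<^esub> A \<in> D)
        \<longrightarrow> cubic G gl ind S)"

definition square_condition :: "('a, 'b) monoid_scheme \<Rightarrow> ('a \<times> 'a) set \<Rightarrow> 'a set \<Rightarrow> bool" where
  "square_condition G ind D \<longleftrightarrow>
     (\<forall>A\<in>D. \<forall>s t. (s, t) \<in> ind \<and> s \<otimes>\<^bsub>G\<^esub> A \<in> D \<and> t \<otimes>\<^bsub>G\<^esub> A \<in> D
        \<longrightarrow> s \<otimes>\<^bsub>G\<^esub> t \<otimes>\<^bsub>G\<^esub> A \<in> D)"

text \<open>1-cells of the glide complex: A and B are joined iff B A^{-1} is a glide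
  (the 1-cube (A,{s}) joins A and sA; it is determined by its endpoints).
  A 1-cell lies in X_D iff both endpoints are in D.\<close>
definition edge_in :: "('a, 'b) monoid_scheme \<Rightarrow> 'a set \<Rightarrow> 'a set \<Rightarrow> 'a \<Rightarrow> 'a \<Rightarrow> bool" where
  "edge_in G gl D u v \<longleftrightarrow> u \<in> D \<and> v \<in> D \<and> v \<otimes>\<^bsub>G\<^esub> inv\<^bsub>G\<^esub> u \<in> gl"

text \<open>2-cells of X_D: squares with vertices A, sA, tA, stA in D, s,t distinct independent.\<close>
definition square_in :: "('a, 'b) monoid_scheme \<Rightarrow> ('a \<times> 'a) set \<Rightarrow> 'a set \<Rightarrow> 'a \<Rightarrow> 'a \<Rightarrow> 'a \<Rightarrow> bool" where
  "square_in G ind D A s t \<longleftrightarrow> (s, t) \<in> ind \<and> s \<noteq> t \<and> A \<in> D \<and>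
     s \<otimes>\<^bsub>G\<^esub> A \<in> D \<and> t \<otimes>\<^bsub>G\<^esub> A \<in> D \<and> s \<otimes>\<^bsub>G\<^esub> (t \<otimes>\<^bsub>G\<^esub> A) \<in> D"

text \<open>Orientation: ori u v means the 1-cell joining u and v is directed from u to v.\<close>
definition orientation :: "('a, 'b) monoid_scheme \<Rightarrow> 'a set \<Rightarrow> ('a \<times> 'a) set \<Rightarrow> 'a set
     \<Rightarrow> ('a \<Rightarrow> 'a \<Rightarrow> bool) \<Rightarrow> bool" where
  "orientation G gl ind D ori \<longleftrightarrow>
     (\<forall>u v. ori u v \<longrightarrow> edge_in G gl D u v) \<and>
     (\<forall>u v. edge_in G gl D u v \<longrightarrow> (ori u v \<longleftrightarrow> \<not> ori v u)) \<and>
     (\<forall>A s t. square_in G ind D A s t \<longrightarrow>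
        (ori A (s \<otimes>\<^bsub>G\<^esub> A) \<longleftrightarrow> ori (t \<otimes>\<^bsub>G\<^esub> A) (s \<otimes>\<^bsub>G\<^esub> (t \<otimes>\<^bsub>G\<^esub> A))))"

definition edge_path :: "('a, 'b) monoid_scheme \<Rightarrow> 'a set \<Rightarrow> 'a set \<Rightarrow> 'a list \<Rightarrow> bool" where
  "edge_path G gl D p \<longleftrightarrow> p \<noteq> [] \<and> set p \<subseteq> D \<and> successively (edge_in G gl D) p"

text \<open>Elementary homotopies of edge paths rel endpoints in X_D (2-skeleton):
  removing a backtrack, and exchanging two adjacent sides of a square for the other two.\<close>
inductive htp_step :: "('a, 'b) monoid_scheme \<Rightarrow> 'a set \<Rightarrow> ('a \<times> 'a) set \<Rightarrow> 'a set
    \<Rightarrow> 'a list \<Rightarrow> 'a list \<Rightarrow> bool" for G gl ind D where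
  backtrack: "edge_in G gl D u v \<Longrightarrow> htp_step G gl ind D (xs @ [u, v, u] @ ys) (xs @ [u] @ ys)"
| square: "square_in G ind D A s t \<Longrightarrow>
    htp_step G gl ind D (xs @ [A, s \<otimes>\<^bsub>G\<^esub> A, t \<otimes>\<^bsub>G\<^esub> (s \<otimes>\<^bsub>G\<^esub> A)] @ ys)
                        (xs @ [A, t \<otimes>\<^bsub>G\<^esub> A, s \<otimes>\<^bsub>G\<^esub> (t \<otimes>\<^bsub>G\<^esub> A)] @ ys)"

definition homotopic :: "('a, 'b) monoid_scheme \<Rightarrow> 'a set \<Rightarrow> ('a \<times> 'a) set \<Rightarrow> 'a set
    \<Rightarrow> 'a list \<Rightarrow> 'a list \<Rightarrow> bool" where
  "homotopic G gl ind D = equivclp (htp_step G gl ind D)"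

text \<open>Words in the RAAG A(G): letters (s, True) = g_s, (s, False) = g_s^{-1}.\<close>
inductive raag_step :: "('a \<times> 'a) set \<Rightarrow> ('a \<times> bool) list \<Rightarrow> ('a \<times> bool) list \<Rightarrow> bool"
  for ind where
  cancel: "raag_step ind (xs @ [(s, b), (s, \<not> b)] @ ys) (xs @ ys)"
| commute: "(s, t) \<in> ind \<Longrightarrow> raag_step ind (xs @ [(s, b), (t, c)] @ ys) (xs @ [(t, c), (s, b)] @ ys)"

definition raag_eq :: "('a \<times> 'a) set \<Rightarrow> ('a \<times> bool) list \<Rightarrow> ('a \<times> bool) list \<Rightarrow> bool" where
  "raag_eq ind = equivclp (raag_step ind)"

definition mu :: "('a, 'b) monoid_scheme \<Rightarrow> ('a \<Rightarrow> 'a \<Rightarrow> bool) \<Rightarrow> 'a list \<Rightarrow> ('a \<times> bool) list" where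
  "mu G ori p = map (\<lambda>(u, v). if ori u v then (v \<otimes>\<^bsub>G\<^esub> inv\<^bsub>G\<^esub> u, True)
                                        else (u \<otimes>\<^bsub>G\<^esub> inv\<^bsub>G\<^esub> v, False)) (zip p (tl p))"

end

theory Submission
  imports Defs
begin


inductive cstep :: "('a \<times> 'a) set \<Rightarrow> ('a \<times> bool) list \<Rightarrow> ('a \<times> bool) list \<Rightarrow> bool" for ind where
  "(fst a, fst b) \<in> ind \<Longrightarrow> cstep ind (xs @ [a, b] @ ys) (xs @ [b, a] @ ys)"

definition linv :: "'a \<times> bool \<Rightarrow> 'a \<times> bool" where "linv l = (fst l, \<not> snd l)"

lemma linv_linv[simp]: "linv (linv l) = l" by (simp add: linv_def)
lemma linv_neq[simp]: "linv l \<noteq> l" "l \<noteq> linv l" by (auto simp: linv_def prod_eq_iff)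
lemma fst_linv[simp]: "fst (linv l) = fst l" by (simp add: linv_def)
lemma linv_inj[simp]: "linv a = linv b \<longleftrightarrow> a = b" by (metis linv_linv)

locale symind =
  fixes ind :: "('a \<times> 'a) set"
  assumes symI: "(s, t) \<in> ind \<Longrightarrow> (t, s) \<in> ind"
begin

abbreviation ceq where "ceq \<equiv> (cstep ind)\<^sup>*\<^sup>*"

lemma cstep_sym: "cstep ind u v \<Longrightarrow> cstep ind v u"
  by (induction rule: cstep.induct) (metis cstep.intros symI)

lemma ceq_sym: "ceq u v \<Longrightarrow> ceq v u"
  by (induction rule: rtranclp_induct) (auto intro: converse_rtranclp_into_rtranclp cstep_sym)

lemma ceq_trans: "ceq u v \<Longrightarrow> ceq v w \<Longrightarrow> ceq u w" by (rule rtranclp_trans)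

lemma cstep_Cons: "cstep ind u v \<Longrightarrow> cstep ind (x#u) (x#v)"
  by (induction rule: cstep.induct) (metis append_Cons cstep.intros)

lemma ceq_Cons: "ceq u v \<Longrightarrow> ceq (x#u) (x#v)"
  by (induction rule: rtranclp_induct) (auto intro: rtranclp.rtrancl_into_rtrancl cstep_Cons)

lemma ceq_swap: "(fst a, fst b) \<in> ind \<Longrightarrow> ceq (a#b#w) (b#a#w)"
  using cstep.intros[of a b ind "[]" w] by auto

lemma cstep_length: "cstep ind u v \<Longrightarrow> length u = length v"
  by (induction rule: cstep.induct) auto

lemma ceq_length: "ceq u v \<Longrightarrow> length u = length v"
  by (induction rule: rtranclp_induct) (auto dest: cstep_length)

fun fa where
  "fa a [] = False"
| "fa a (x#xs) = (x = a \<or> ((fst x, fst a) \<in> ind \<and> fa a xs))"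

fun dr where
  "dr a [] = []"
| "dr a (x#xs) = (if x = a then xs else x # dr a xs)"

lemma L1: "fa a w \<Longrightarrow> ceq w (a # dr a w)"
proof (induction w)
  case (Cons x xs)
  show ?case
  proof (cases "x = a")
    case False
    with Cons have i: "(fst x, fst a) \<in> ind" "fa a xs" by auto
    have "ceq (x#xs) (x#a#dr a xs)" using Cons.IH[OF i(2)] by (rule ceq_Cons)
    also have "ceq \<dots> (a#x#dr a xs)" using i(1) by (rule ceq_swap)
    finally show ?thesis using False by simp
  qed simp
qed simp

lemma ceq_swap_gen: "(fst b, fst c) \<in> ind \<Longrightarrow> ceq (xs@b#c#ys) (xs@c#b#ys)"
  using cstep.intros[of b c ind xs ys] by auto

lemma L2a: "(fst b, fst c) \<in> ind \<Longrightarrow> (fa a (xs@b#c#ys) \<longleftrightarrow> fa a (xs@c#b#ys)) \<and>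
   (fa a (xs@b#c#ys) \<longrightarrow> ceq (dr a (xs@b#c#ys)) (dr a (xs@c#b#ys)))"
proof (induction xs)
  case Nil
  then show ?case using symI[OF Nil] by (auto intro: ceq_swap)
next
  case (Cons x xs)
  then show ?case by (auto intro: ceq_Cons ceq_swap_gen)
qed

lemma L2b: "cstep ind u v \<Longrightarrow> (fa a u \<longleftrightarrow> fa a v) \<and> (fa a u \<longrightarrow> ceq (dr a u) (dr a v))"
proof (induction rule: cstep.induct)
  case (1 x y xs ys)
  from L2a[OF 1, of a xs ys] show ?case by simp
qed

lemma L2: "ceq u v \<Longrightarrow> (fa a u \<longleftrightarrow> fa a v) \<and> (fa a u \<longrightarrow> ceq (dr a u) (dr a v))"
proof (induction rule: rtranclp_induct)
  case (step y z)
  then show ?case using L2b[OF step(2), of a] by (auto intro: ceq_trans)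
qed simp

lemma T1: "ceq (a#u) (a#v) \<Longrightarrow> ceq u v"
  using L2[of "a#u" "a#v" a] by simp

lemma T2: assumes "ceq (a#u) (b#v)" "a \<noteq> b"
  shows "(fst a, fst b) \<in> ind \<and> ceq u (b # dr b u) \<and> ceq v (a # dr b u)"
proof -
  have l2: "(fa b (a#u) \<longleftrightarrow> fa b (b#v)) \<and> (fa b (a#u) \<longrightarrow> ceq (dr b (a#u)) (dr b (b#v)))"
    using L2[OF assms(1), of b] .
  have h1: "fa b (a#u)" using l2 by simp
  then have "(fst a, fst b) \<in> ind" "fa b u" using assms(2) by auto
  moreover have "ceq (a # dr b u) v" using l2 h1 assms(2) by simp
  then have "ceq v (a # dr b u)" by (rule ceq_sym)
  ultimately show ?thesis using L1 by blast
qed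

definition red where
  "red w \<longleftrightarrow> (\<forall>w' xs ys l. ceq w w' \<longrightarrow> w' \<noteq> xs @ [l, linv l] @ ys)"

lemma red_E: "red w \<Longrightarrow> ceq w (xs @ [l, linv l] @ ys) \<Longrightarrow> False"
  unfolding red_def by blast

lemma red_E2: "red w \<Longrightarrow> ceq w (l # linv l # ys) \<Longrightarrow> False"
  using red_E[of w "[]" l ys] by simp

lemma red_Nil: "red []"
  unfolding red_def
proof (intro allI impI notI)
  fix w' xs ys l assume "ceq [] w'" "w' = xs@[l, linv l]@ys"
  then show False using ceq_length[of "[]" w'] by simp
qed

lemma red_ceq: assumes "ceq w w'" "red w" shows "red w'"
  unfolding red_def
proof (intro allI impI notI)
  fix w'' xs ys l assume a: "ceq w' w''" "w'' = xs@[l, linv l]@ys"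
  have "ceq w (xs@[l, linv l]@ys)" using ceq_trans[OF assms(1) a(1)] a(2) by simp
  then show False using red_E[OF assms(2)] by blast
qed

lemma red_Cons: assumes "red (a#w)" shows "red w"
  unfolding red_def
proof (intro allI impI notI)
  fix w'' xs ys l assume a: "ceq w w''" "w'' = xs@[l, linv l]@ys"
  have "ceq (a#w) ((a#xs)@[l, linv l]@ys)" using ceq_Cons[OF a(1), of a] a(2) by simp
  then show False using red_E[OF assms] by blast
qed

lemma R2aux: "\<forall>w. red w \<longrightarrow> \<not>(\<exists>v. ceq w (linv a # v)) \<longrightarrow> ceq (a # w) (xs @ [l, linv l] @ ys) \<longrightarrow> False"
proof (induction xs)
  case Nil
  show ?case
  proof (intro allI impI)
    fix w assume r: "red w" and np: "\<not>(\<exists>v. ceq w (linv a # v))" and c0: "ceq (a # w) ([] @ [l, linv l] @ ys)"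
    have c: "ceq (a # w) (l # linv l # ys)" using c0 by simp
    show False
    proof (cases "l = a")
      case True
      then have "ceq (a # w) (a # linv a # ys)" using c by simp
      then have "ceq w (linv a # ys)" by (rule T1)
      then show False using np by blast
    next
      case False
      have ne: "a \<noteq> l" using False by simp
      from T2[OF c ne]
      have w1: "ceq w (l # dr l w)" and w2': "ceq (linv l # ys) (a # dr l w)" by (simp_all add: ceq_sym)
      have w2: "ceq (linv l # ys) (a # dr l w)" using w2' .
      show False
      proof (cases "linv l = a")
        case True
        then have "l = linv a" by (metis linv_linv)
        then have "ceq w (linv a # dr l w)" using w1 by simp
        then show False using np by blast
      next
        case False
        have ne2: "linv l \<noteq> a" using False .
        from T2[OF w2 ne2] have "ceq (dr l w) (linv l # dr a ys)" by blast
        then have "ceq (l # dr l w) (l # linv l # dr a ys)" by (rule ceq_Cons)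
        then have "ceq w (l # linv l # dr a ys)" by (rule ceq_trans[OF w1])
        then show False by (rule red_E2[OF r])
      qed
    qed
  qed
next
  case (Cons x xs)
  show ?case
  proof (intro allI impI)
    fix w assume r: "red w" and np: "\<not>(\<exists>v. ceq w (linv a # v))" and c0: "ceq (a # w) ((x#xs) @ [l, linv l] @ ys)"
    have c: "ceq (a # w) (x # (xs @ [l, linv l] @ ys))" using c0 by simp
    show False
    proof (cases "x = a")
      case True
      then have "ceq (a # w) (a # (xs @ [l, linv l] @ ys))" using c by simp
      then have "ceq w (xs @ [l, linv l] @ ys)" by (rule T1)
      then show False by (rule red_E[OF r])
    next
      case False
      have ne: "a \<noteq> x" using False by simp
      from T2[OF c ne]
      have i: "(fst a, fst x) \<in> ind" and w1: "ceq w (x # dr x w)"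
        and w2: "ceq (xs @ [l, linv l] @ ys) (a # dr x w)" by auto
      have rz: "red (dr x w)" by (rule red_Cons[OF red_ceq[OF w1 r]])
      have npz: "\<not>(\<exists>v. ceq (dr x w) (linv a # v))"
      proof
        assume "\<exists>v. ceq (dr x w) (linv a # v)"
        then obtain v where "ceq (dr x w) (linv a # v)" by blast
        then have "ceq (x # dr x w) (x # linv a # v)" by (rule ceq_Cons)
        then have c1: "ceq w (x # linv a # v)" by (rule ceq_trans[OF w1])
        have "ceq (x # linv a # v) (linv a # x # v)"
          by (rule ceq_swap) (use symI[OF i] in simp)
        then have "ceq w (linv a # x # v)" by (rule ceq_trans[OF c1])
        then show False using np by blast
      qed
      have "ceq (a # dr x w) (xs @ [l, linv l] @ ys)" by (rule ceq_sym[OF w2])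
      then show False using Cons.IH rz npz by blast
    qed
  qed
qed

lemma R2: assumes "red w" "\<not>(\<exists>v. ceq w (linv a # v))" shows "red (a # w)"
  unfolding red_def
proof (intro allI impI notI)
  fix w' xs ys l assume "ceq (a#w) w'" "w' = xs@[l, linv l]@ys"
  then show False using R2aux[of a xs l ys] assms by blast
qed

definition stp where
  "stp l w = (if \<exists>v. ceq w (linv l # v) then (SOME v. ceq w (linv l # v)) else l # w)"

definition NF where "NF w = foldr stp w []"

lemma stp_P: "ceq w (linv l # v) \<Longrightarrow> ceq w (linv l # stp l w)"
  unfolding stp_def by (auto intro: someI)

lemma stp_nP: "\<not>(\<exists>v. ceq w (linv l # v)) \<Longrightarrow> stp l w = l # w"
  unfolding stp_def by auto

lemma stp_cong: assumes "ceq w w'" shows "ceq (stp l w) (stp l w')"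
proof (cases "\<exists>v. ceq w (linv l # v)")
  case True
  then obtain v where v: "ceq w (linv l # v)" by blast
  have v': "ceq w' (linv l # v)" using v assms ceq_sym ceq_trans by blast
  have "ceq (linv l # stp l w) (linv l # stp l w')"
    using stp_P[OF v] stp_P[OF v'] assms ceq_sym ceq_trans by blast
  then show ?thesis by (rule T1)
next
  case False
  then have "\<not>(\<exists>v. ceq w' (linv l # v))" using assms ceq_trans by blast
  then show ?thesis using False stp_nP ceq_Cons assms by metis
qed

lemma foldr_cong: "ceq w w' \<Longrightarrow> ceq (foldr stp xs w) (foldr stp xs w')"
  by (induction xs) (auto intro: stp_cong)

lemma red_stp: assumes "red w" shows "red (stp l w)"
proof (cases "\<exists>v. ceq w (linv l # v)")
  case True
  then obtain v where "ceq w (linv l # v)" by blast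
  from stp_P[OF this] show ?thesis using red_ceq[OF _ assms] red_Cons by blast
next
  case False
  then show ?thesis using R2[OF assms] stp_nP by metis
qed

lemma red_foldr: "red (foldr stp xs [])"
  by (induction xs) (auto intro: red_stp red_Nil)

lemma red_NF: "red (NF w)" unfolding NF_def by (rule red_foldr)

lemma st_cancel: assumes r: "red c" shows "ceq (stp l (stp (linv l) c)) c"
proof (cases "\<exists>v. ceq c (l # v)")
  case True
  then obtain v where "ceq c (linv (linv l) # v)" by auto
  from stp_P[OF this] have c0: "ceq c (l # stp (linv l) c)" by simp
  have "\<not>(\<exists>v'. ceq (stp (linv l) c) (linv l # v'))"
  proof
    assume "\<exists>v'. ceq (stp (linv l) c) (linv l # v')"
    then obtain v' where "ceq (stp (linv l) c) (linv l # v')" by blast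
    then have "ceq c (l # linv l # v')" using c0 ceq_Cons ceq_trans by blast
    then show False using r unfolding red_def by (metis append.left_neutral append_Cons)
  qed
  then show ?thesis using stp_nP c0 ceq_sym by metis
next
  case False
  then have "stp (linv l) c = linv l # c" using stp_nP[of c "linv l"] by simp
  moreover have "ceq (linv l # c) (linv l # stp l (linv l # c))"
    using stp_P[of "linv l # c" l c] by simp
  ultimately show ?thesis using T1 ceq_sym by metis
qed

lemma st_comm_ii:
  assumes r: "red c" and i: "(fst a, fst b) \<in> ind" and pb: "ceq c (linv b # v)"
    and npa: "\<not>(\<exists>v. ceq c (linv a # v))"
  shows "ceq (stp a (stp b c)) (stp b (stp a c))"
proof -
  define v0 where "v0 = stp b c"
  have c0: "ceq c (linv b # v0)" using stp_P[OF pb] v0_def by simp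
  have "\<not>(\<exists>z. ceq v0 (linv a # z))"
  proof
    assume "\<exists>z. ceq v0 (linv a # z)"
    then obtain z where "ceq v0 (linv a # z)" by blast
    then have "ceq c (linv b # linv a # z)" using c0 ceq_Cons ceq_trans by blast
    moreover have "ceq (linv b # linv a # z) (linv a # linv b # z)"
      by (rule ceq_swap) (use symI[OF i] in simp)
    ultimately show False using npa ceq_trans by blast
  qed
  then have e1: "stp a v0 = a # v0" by (rule stp_nP)
  have e2: "stp a c = a # c" using npa by (rule stp_nP)
  have "ceq (a # c) (a # linv b # v0)" using c0 by (rule ceq_Cons)
  moreover have "ceq (a # linv b # v0) (linv b # a # v0)" by (rule ceq_swap) (use i in simp)
  ultimately have ac: "ceq (a # c) (linv b # a # v0)" using ceq_trans by blast
  have "ceq (a # c) (linv b # stp b (a # c))" using stp_P[OF ac] .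
  then have "ceq (linv b # a # v0) (linv b # stp b (a # c))" using ac ceq_sym ceq_trans by blast
  then have "ceq (a # v0) (stp b (a # c))" by (rule T1)
  then show ?thesis using e1 e2 v0_def by simp
qed

lemma st_comm: assumes r: "red c" and i: "(fst a, fst b) \<in> ind"
  shows "ceq (stp a (stp b c)) (stp b (stp a c))"
proof (cases "a = b")
  case True then show ?thesis by simp
next
  case ab: False
  have i': "(fst b, fst a) \<in> ind" using symI[OF i] .
  show ?thesis
  proof (cases "\<exists>v. ceq c (linv b # v)")
    case pb: True
    then obtain v where v: "ceq c (linv b # v)" by blast
    show ?thesis
    proof (cases "\<exists>v. ceq c (linv a # v)")
      case pa: True
      then obtain w where w: "ceq c (linv a # w)" by blast
      define v0 where "v0 = stp b c"
      define w0 where "w0 = stp a c"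
      have c0: "ceq c (linv b # v0)" using stp_P[OF v] v0_def by simp
      have c1: "ceq c (linv a # w0)" using stp_P[OF w] w0_def by simp
      have "ceq (linv b # v0) (linv a # w0)" using c0 c1 ceq_sym ceq_trans by blast
      from T2[OF this] ab have "ceq v0 (linv a # dr (linv a) v0)" by simp
      from stp_P[OF this] have z0: "ceq v0 (linv a # stp a v0)" .
      have "ceq (linv a # w0) (linv b # v0)" using c0 c1 ceq_sym ceq_trans by blast
      from T2[OF this] ab have "ceq w0 (linv b # dr (linv b) w0)" by simp
      from stp_P[OF this] have z1: "ceq w0 (linv b # stp b w0)" .
      have "ceq c (linv b # linv a # stp a v0)" using c0 z0 ceq_Cons ceq_trans by blast
      moreover have "ceq (linv b # linv a # stp a v0) (linv a # linv b # stp a v0)"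
        by (rule ceq_swap) (use i' in simp)
      moreover have "ceq c (linv a # linv b # stp b w0)" using c1 z1 ceq_Cons ceq_trans by blast
      ultimately have "ceq (linv a # linv b # stp a v0) (linv a # linv b # stp b w0)"
        using ceq_sym ceq_trans by blast
      then have "ceq (stp a v0) (stp b w0)" using T1 by blast
      then show ?thesis using v0_def w0_def by simp
    next
      case False
      show ?thesis using st_comm_ii[OF r i v False] .
    qed
  next
    case npb: False
    show ?thesis
    proof (cases "\<exists>v. ceq c (linv a # v)")
      case True
      then obtain w where w: "ceq c (linv a # w)" by blast
      show ?thesis using st_comm_ii[OF r i' w npb] ceq_sym by blast
    next
      case npa: False
      have e1: "stp b c = b # c" "stp a c = a # c" using npa npb stp_nP by auto
      show ?thesis
      proof (cases "b = linv a")
        case True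
        have "ceq (b # c) (linv a # stp a (b # c))" using stp_P[of "b#c" a c] True by simp
        then have x1: "ceq c (stp a (b#c))" using True T1 by simp
        have "ceq (a # c) (linv b # stp b (a # c))" using stp_P[of "a#c" b c] True by simp
        then have x2: "ceq c (stp b (a#c))" using True T1 by simp
        show ?thesis using e1 x1 x2 ceq_sym ceq_trans by metis
      next
        case False
        have n1: "\<not>(\<exists>v. ceq (b#c) (linv a # v))"
        proof
          assume "\<exists>v. ceq (b#c) (linv a # v)"
          then obtain v where "ceq (b#c) (linv a # v)" by blast
          from T2[OF this] False have "ceq c (linv a # dr (linv a) c)" by auto
          then show False using npa by blast
        qed
        have n2: "\<not>(\<exists>v. ceq (a#c) (linv b # v))"
        proof
          assume "\<exists>v. ceq (a#c) (linv b # v)"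
          then obtain v where "ceq (a#c) (linv b # v)" by blast
          from T2[OF this] False have "ceq c (linv b # dr (linv b) c)" by (metis linv_linv)
          then show False using npb by blast
        qed
        show ?thesis using e1 stp_nP[OF n1] stp_nP[OF n2] ceq_swap[OF i] by simp
      qed
    qed
  qed
qed

lemma NF_step: "raag_step ind w w' \<Longrightarrow> ceq (NF w) (NF w')"
proof (induction rule: raag_step.induct)
  case (cancel xs s b ys)
  have "ceq (stp (s, b) (stp (linv (s,b)) (NF ys))) (NF ys)" by (rule st_cancel[OF red_NF])
  then show ?case unfolding NF_def using foldr_cong by (simp add: linv_def)
next
  case (commute s t xs b c ys)
  have "ceq (stp (s, b) (stp (t,c) (NF ys))) (stp (t, c) (stp (s,b) (NF ys)))"
    by (rule st_comm[OF red_NF]) (use commute in simp)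
  then show ?case unfolding NF_def using foldr_cong by simp
qed

lemma NF_eq: "raag_eq ind w w' \<Longrightarrow> ceq (NF w) (NF w')"
  unfolding raag_eq_def
proof (induction rule: equivclp_induct)
  case (step y z)
  from step(2) have "ceq (NF y) (NF z)"
  proof (elim disjE)
    assume "raag_step ind y z" then show ?thesis by (rule NF_step)
  next
    assume "raag_step ind z y" then show ?thesis by (rule ceq_sym[OF NF_step])
  qed
  then show ?case by (rule ceq_trans[OF step(3)])
qed simp

end


locale gctx = group +
  fixes gl :: "'a set" and ind :: "('a \<times> 'a) set" and D :: "'a set" and ori :: "'a \<Rightarrow> 'a \<Rightarrow> bool"
  assumes gs: "gliding_system G gl ind"
    and Dc: "D \<subseteq> carrier G"
    and sqc: "square_condition G ind D"
    and orr: "orientation G gl ind D ori"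
begin

lemma gl_carr: "s \<in> gl \<Longrightarrow> s \<in> carrier G" using gs unfolding gliding_system_def by auto
lemma gl_inv: "s \<in> gl \<Longrightarrow> inv s \<in> gl" using gs unfolding gliding_system_def by auto
lemma ind_props: "(s, t) \<in> ind \<Longrightarrow> s \<in> gl \<and> t \<in> gl \<and> (inv s, t) \<in> ind \<and> (t, s) \<in> ind \<and>
   s \<otimes> t = t \<otimes> s \<and> s \<otimes> t \<noteq> \<one>"
  using gs unfolding gliding_system_def by blast

sublocale symind ind
  by unfold_locales (use ind_props in blast)

lemma ind_invs: assumes "(s, t) \<in> ind" shows "(inv s, t) \<in> ind" "(s, inv t) \<in> ind" "(inv s, inv t) \<in> ind"
proof -
  show a: "(inv s, t) \<in> ind" using ind_props[OF assms] by blast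
  have "(inv t, s) \<in> ind" using ind_props[OF ind_props[OF assms, THEN conjunct2, THEN conjunct2, THEN conjunct2, THEN conjunct1]] by blast
  then show b: "(s, inv t) \<in> ind" using ind_props by blast
  have "(inv t, inv s) \<in> ind" using ind_props[OF a] ind_props by blast
  then show "(inv s, inv t) \<in> ind" using ind_props by blast
qed

lemma D_carr: "u \<in> D \<Longrightarrow> u \<in> carrier G" using Dc by blast

definition Lt where "Lt u v = (if ori u v then (v \<otimes> inv u, True) else (u \<otimes> inv v, False))"

definition tgt where "tgt u l = (if snd l then fst l \<otimes> u else inv (fst l) \<otimes> u)"

lemma mu_Nil[simp]: "mu G ori [] = []" and mu_single[simp]: "mu G ori [u] = []"
  by (simp_all add: mu_def)
lemma mu_Cons2[simp]: "mu G ori (u#v#r) = Lt u v # mu G ori (v#r)"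
  by (simp add: mu_def Lt_def)
lemma mu_length: "length (mu G ori p) = length p - 1" by (simp add: mu_def)

lemma cancel_r: "g \<in> carrier G \<Longrightarrow> w \<in> carrier G \<Longrightarrow> (g \<otimes> w) \<otimes> inv w = g"
  by (simp add: m_assoc)
lemma cancel_r2: "g \<in> carrier G \<Longrightarrow> w \<in> carrier G \<Longrightarrow> w \<otimes> inv (g \<otimes> w) = inv g"
  by (simp add: inv_mult_group m_assoc[symmetric])
lemma cancel_l: "g \<in> carrier G \<Longrightarrow> w \<in> carrier G \<Longrightarrow> inv g \<otimes> (g \<otimes> w) = w"
  by (simp add: m_assoc[symmetric])
lemma cancel_l2: "g \<in> carrier G \<Longrightarrow> w \<in> carrier G \<Longrightarrow> (w \<otimes> inv g) \<otimes> g = w"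
  by (simp add: m_assoc)

lemma G1: "u \<in> carrier G \<Longrightarrow> v \<in> carrier G \<Longrightarrow> tgt u (Lt u v) = v"
  by (auto simp: tgt_def Lt_def cancel_l2 inv_mult_group m_assoc)

lemma G2: "u \<in> carrier G \<Longrightarrow> v \<in> carrier G \<Longrightarrow> tgt v (linv (Lt u v)) = u"
  by (auto simp: tgt_def Lt_def linv_def cancel_l2 inv_mult_group m_assoc)

lemma Lg: "g \<in> carrier G \<Longrightarrow> w \<in> carrier G \<Longrightarrow>
   Lt w (g \<otimes> w) = (if ori w (g \<otimes> w) then (g, True) else (inv g, False))"
  by (simp add: Lt_def cancel_r cancel_r2)

lemma ep_Cons2: "edge_path G gl D (u#v#r) \<longleftrightarrow> edge_in G gl D u v \<and> edge_path G gl D (v#r)"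
  by (auto simp: edge_path_def edge_in_def)
lemma ep_single: "edge_path G gl D [u] \<longleftrightarrow> u \<in> D"
  by (auto simp: edge_path_def)
lemma ep_ne: "edge_path G gl D p \<Longrightarrow> p \<noteq> []" by (simp add: edge_path_def)
lemma ep_D: "edge_path G gl D p \<Longrightarrow> set p \<subseteq> D" by (simp add: edge_path_def)

lemma uniq: "edge_path G gl D p \<Longrightarrow> edge_path G gl D q \<Longrightarrow> hd p = hd q \<Longrightarrow> mu G ori p = mu G ori q \<Longrightarrow> p = q"
proof (induction p arbitrary: q rule: induct_list012)
  case 1 then show ?case by (simp add: edge_path_def)
next
  case (2 u)
  then obtain r where q: "q = u # r" by (cases q) (auto simp: edge_path_def)
  show ?case using 2 q by (cases r) auto
next
  case (3 u v r)
  obtain r0 where q: "q = u # r0" using 3 by (cases q) (auto simp: edge_path_def)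
  then obtain v' r' where q': "q = u # v' # r'" using 3 by (cases r0) auto
  have e: "Lt u v = Lt u v'" "mu G ori (v#r) = mu G ori (v'#r')" using 3 q' by auto
  have c: "u \<in> carrier G" "v \<in> carrier G" "v' \<in> carrier G"
    using ep_D[OF "3.prems"(1)] ep_D[OF "3.prems"(2)] q' Dc by auto
  have "v = v'" using G1[of u v] G1[of u v'] c e by metis
  moreover
  have ep1: "edge_path G gl D (v#r)" using "3.prems"(1) ep_Cons2 by blast
  have ep2: "edge_path G gl D (v'#r')" using "3.prems"(2) q' ep_Cons2 by blast
  have "v # r = v' # r'" using "3.IH"(2)[OF ep1 ep2] \<open>v = v'\<close> e(2) by simp
  ultimately show ?case using q' by simp
qed

lemma htp_Cons: "htp_step G gl ind D p q \<Longrightarrow> htp_step G gl ind D (u#p) (u#q)"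
proof (induction rule: htp_step.induct)
  case (backtrack a b xs ys)
  then show ?case using htp_step.backtrack[where xs="u#xs" and ys=ys and ind=ind] by simp
next
  case (square A s t xs ys)
  then show ?case using htp_step.square[where xs="u#xs" and ys=ys and gl=gl] by simp
qed

lemma hom_Cons: "homotopic G gl ind D p q \<Longrightarrow> homotopic G gl ind D (u#p) (u#q)"
  unfolding homotopic_def
proof (induction rule: equivclp_induct)
  case (step y z)
  then show ?case using htp_Cons equivclp_into_equivclp by metis
qed simp

lemma hom_trans: "homotopic G gl ind D p q \<Longrightarrow> homotopic G gl ind D q r \<Longrightarrow> homotopic G gl ind D p r"
  unfolding homotopic_def by (rule equivclp_trans)

lemma ind_fix: assumes "(s', t') \<in> ind" "s' = s \<or> s' = inv s" "t' = t \<or> t' = inv t"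
    "s \<in> carrier G" "t \<in> carrier G"
  shows "(s, t) \<in> ind"
  using assms ind_invs[OF assms(1)] by auto


lemma Lt_fst: "u \<in> carrier G \<Longrightarrow> v \<in> carrier G \<Longrightarrow>
  fst (Lt u v) = v \<otimes> inv u \<or> fst (Lt u v) = inv (v \<otimes> inv u)"
  by (simp add: Lt_def inv_mult_group)

lemma base_sq:
  assumes ep: "edge_path G gl D (u#v#x#r')" and i: "(fst (Lt u v), fst (Lt v x)) \<in> ind"
  shows "\<exists>p'. edge_path G gl D p' \<and> hd p' = u \<and> mu G ori p' = Lt v x # Lt u v # mu G ori (x#r')
     \<and> homotopic G gl ind D (u#v#x#r') p'"
proof -
  have e1: "edge_in G gl D u v" and e2: "edge_in G gl D v x" and ep3: "edge_path G gl D (x#r')"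
    using ep ep_Cons2 by blast+
  have uD: "u \<in> D" and vD: "v \<in> D" and xD: "x \<in> D" using e1 e2 by (auto simp: edge_in_def)
  have uc: "u \<in> carrier G" and vc: "v \<in> carrier G" and xc: "x \<in> carrier G" using uD vD xD Dc by auto
  define \<sigma> where "\<sigma> = v \<otimes> inv u"
  define \<tau> where "\<tau> = x \<otimes> inv v"
  have sg: "\<sigma> \<in> gl" and tg: "\<tau> \<in> gl" using e1 e2 by (auto simp: edge_in_def \<sigma>_def \<tau>_def)
  have sc: "\<sigma> \<in> carrier G" and tc: "\<tau> \<in> carrier G" using sg tg gl_carr by auto
  have st: "(\<sigma>, \<tau>) \<in> ind"
    by (rule ind_fix[OF i]) (use Lt_fst[OF uc vc] Lt_fst[OF vc xc] sc tc in \<open>auto simp: \<sigma>_def \<tau>_def\<close>)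
  have P: "(inv \<sigma>, \<tau>) \<in> ind" "(\<tau>, \<sigma>) \<in> ind" "\<sigma> \<otimes> \<tau> = \<tau> \<otimes> \<sigma>" using ind_props[OF st] by auto
  have neq: "\<sigma> \<noteq> \<tau>"
  proof
    assume "\<sigma> = \<tau>"
    then have "inv \<sigma> \<otimes> \<tau> = \<one>" using sc by simp
    then show False using ind_props[OF P(1)] by blast
  qed
  have v_eq: "v = \<sigma> \<otimes> u" using uc vc by (simp add: \<sigma>_def m_assoc)
  have x_eq: "x = \<tau> \<otimes> v" using vc xc by (simp add: \<tau>_def m_assoc)
  define w where "w = \<tau> \<otimes> u"
  have wc: "w \<in> carrier G" using tc uc by (simp add: w_def)
  have x_eq2: "x = \<sigma> \<otimes> w"
    using x_eq v_eq P(3) sc tc uc by (simp add: w_def m_assoc[symmetric])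
  have "inv \<sigma> \<otimes> \<tau> \<otimes> v \<in> D"
    using sqc vD P(1) unfolding square_condition_def
    using cancel_l[OF sc uc] v_eq x_eq xD uD by metis
  moreover have "inv \<sigma> \<otimes> \<tau> \<otimes> v = w"
  proof -
    have "inv \<sigma> \<otimes> \<tau> \<otimes> v = inv \<sigma> \<otimes> (\<tau> \<otimes> \<sigma>) \<otimes> u" using v_eq sc tc uc by (simp add: m_assoc)
    also have "\<dots> = inv \<sigma> \<otimes> (\<sigma> \<otimes> \<tau>) \<otimes> u" using P(3) by simp
    also have "\<dots> = w" using sc tc uc by (simp add: m_assoc[symmetric] w_def)
    finally show ?thesis .
  qed
  ultimately have wD: "w \<in> D" by simp
  have sq1: "square_in G ind D u \<sigma> \<tau>"
    unfolding square_in_def using st neq uD vD wD xD v_eq x_eq2 w_def by simp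
  have sq2: "square_in G ind D u \<tau> \<sigma>"
    unfolding square_in_def using P(2) neq uD vD wD xD v_eq x_eq w_def by simp
  have o1: "ori u (\<sigma> \<otimes> u) \<longleftrightarrow> ori w (\<sigma> \<otimes> w)"
    using orr sq1 unfolding orientation_def w_def by blast
  have o2: "ori u (\<tau> \<otimes> u) \<longleftrightarrow> ori v (\<tau> \<otimes> v)"
    using orr sq2 v_eq unfolding orientation_def by blast
  have h: "htp_step G gl ind D ([] @ [u, \<sigma> \<otimes> u, \<tau> \<otimes> (\<sigma> \<otimes> u)] @ r') ([] @ [u, \<tau> \<otimes> u, \<sigma> \<otimes> (\<tau> \<otimes> u)] @ r')"
    by (rule htp_step.square[OF sq1])
  then have h': "htp_step G gl ind D (u#v#x#r') (u#w#x#r')"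
    using v_eq x_eq x_eq2 w_def by simp
  have ew1: "edge_in G gl D u w" unfolding edge_in_def using uD wD tg cancel_r[OF tc uc] w_def by simp
  have ew2: "edge_in G gl D w x" unfolding edge_in_def using wD xD sg cancel_r[OF sc wc] x_eq2 by simp
  have ep': "edge_path G gl D (u#w#x#r')" using ew1 ew2 ep3 ep_Cons2 by blast
  have L1: "Lt u w = Lt v x" using Lg[OF tc uc] Lg[OF tc vc] o2 x_eq w_def by simp
  have L2: "Lt w x = Lt u v" using Lg[OF sc wc] Lg[OF sc uc] o1 x_eq2 v_eq by simp
  show ?thesis
    by (rule exI[of _ "u#w#x#r'"]) (use ep' L1 L2 h' in \<open>auto simp: homotopic_def\<close>)
qed

lemma lift1: "edge_path G gl D p \<Longrightarrow> mu G ori p = xs @ [a,b] @ ys \<Longrightarrow> (fst a, fst b) \<in> ind \<Longrightarrow>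
  \<exists>p'. edge_path G gl D p' \<and> hd p' = hd p \<and> mu G ori p' = xs @ [b,a] @ ys \<and> homotopic G gl ind D p p'"
proof (induction xs arbitrary: p)
  case Nil
  have "length p \<ge> 3" using mu_length[of p] Nil(2) by simp
  then obtain u v x r' where p: "p = u#v#x#r'"
    by (metis Suc_le_length_iff numeral_3_eq_3)
  have "Lt u v = a" "Lt v x = b" "mu G ori (x#r') = ys" using Nil(2) p by auto
  then show ?case using base_sq[of u v x r'] Nil p by auto
next
  case (Cons c xs)
  have "length p \<ge> 2" using mu_length[of p] Cons(3) by simp
  then obtain u v r where p: "p = u#v#r"
    by (metis Suc_le_length_iff numeral_2_eq_2)
  have m: "mu G ori (v#r) = xs @ [a,b] @ ys" using Cons(3) p by simp
  have ep1: "edge_path G gl D (v#r)" and e: "edge_in G gl D u v" using Cons(2) p ep_Cons2 by auto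
  obtain p1 where p1: "edge_path G gl D p1" "hd p1 = v" "mu G ori p1 = xs @ [b,a] @ ys"
    "homotopic G gl ind D (v#r) p1" using Cons.IH[OF ep1 m Cons(4)] by auto
  obtain r1 where r1: "p1 = v # r1" using p1(1,2) ep_ne by (cases p1) auto
  have "edge_path G gl D (u#p1)" using e p1(1) r1 ep_Cons2 by simp
  moreover have "mu G ori (u#p1) = (c#xs) @ [b,a] @ ys" using Cons(3) p r1 p1(3) by simp
  moreover have "homotopic G gl ind D p (u#p1)" using hom_Cons[OF p1(4)] p by simp
  ultimately show ?case using p by auto
qed

lemma lift_ceq: "ceq (mu G ori p) w \<Longrightarrow> edge_path G gl D p \<Longrightarrow>
  \<exists>p'. edge_path G gl D p' \<and> hd p' = hd p \<and> mu G ori p' = w \<and> homotopic G gl ind D p p'"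
proof (induction rule: rtranclp_induct)
  case base then show ?case by (auto simp: homotopic_def)
next
  case (step y z)
  then obtain p1 where p1: "edge_path G gl D p1" "hd p1 = hd p" "mu G ori p1 = y" "homotopic G gl ind D p p1"
    by auto
  from step(2) obtain xs a b ys where "y = xs @ [a,b] @ ys" "z = xs @ [b,a] @ ys" "(fst a, fst b) \<in> ind"
    by (cases rule: cstep.cases) auto
  then obtain p2 where "edge_path G gl D p2" "hd p2 = hd p1" "mu G ori p2 = z" "homotopic G gl ind D p1 p2"
    using lift1[OF p1(1)] p1(3) by blast
  then show ?case using p1 hom_trans by metis
qed

lemma path_lift: "edge_path G gl D p \<Longrightarrow>
  \<exists>p'. edge_path G gl D p' \<and> hd p' = hd p \<and> homotopic G gl ind D p p' \<and> ceq (mu G ori p') (NF (mu G ori p))"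
proof (induction p)
  case Nil then show ?case by (simp add: edge_path_def)
next
  case (Cons u r)
  show ?case
  proof (cases r)
    case Nil
    then show ?thesis using Cons by (auto simp: homotopic_def NF_def)
  next
    case (Cons v r')
    note r = this
    have ep1: "edge_path G gl D r" and e: "edge_in G gl D u v" using Cons.prems r ep_Cons2 by auto
    obtain p1 where p1: "edge_path G gl D p1" "hd p1 = v" "homotopic G gl ind D r p1"
      "ceq (mu G ori p1) (NF (mu G ori r))" using Cons.IH[OF ep1] r by auto
    obtain r1 where r1: "p1 = v # r1" using p1(1,2) ep_ne by (cases p1) auto
    define l where "l = Lt u v"
    define c where "c = NF (mu G ori r)"
    have NFp: "NF (mu G ori (u#r)) = stp l c" using r by (simp add: NF_def l_def c_def)
    have hp1: "homotopic G gl ind D (u#r) (u#p1)" using hom_Cons[OF p1(3)] .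
    have uc: "u \<in> carrier G" and vc: "v \<in> carrier G" using e Dc by (auto simp: edge_in_def)
    show ?thesis
    proof (cases "\<exists>v0. ceq c (linv l # v0)")
      case True
      then obtain v0 where "ceq c (linv l # v0)" by blast
      from stp_P[OF this] have cc: "ceq c (linv l # stp l c)" .
      have "ceq (mu G ori p1) (linv l # stp l c)" using p1(4) cc c_def ceq_trans by blast
      from lift_ceq[OF this p1(1)] obtain p2 where p2: "edge_path G gl D p2" "hd p2 = v"
        "mu G ori p2 = linv l # stp l c" "homotopic G gl ind D p1 p2" using p1(2) by auto
      have "length p2 \<ge> 2" using mu_length[of p2] p2(3) by simp
      then obtain y r2 where p2e: "p2 = v # y # r2" using p2(2)
        by (cases p2; cases "tl p2") auto
      have e2: "edge_in G gl D v y" and ep2: "edge_path G gl D (y#r2)" using p2(1) p2e ep_Cons2 by auto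
      have yc: "y \<in> carrier G" using e2 Dc by (auto simp: edge_in_def)
      have Ly: "Lt v y = linv l" and mr2: "mu G ori (y#r2) = stp l c" using p2(3) p2e by auto
      have "y = u" using G1[OF vc yc] G2[OF uc vc] Ly l_def by metis
      then have hb: "htp_step G gl ind D (u#v#u#r2) (u#r2)"
        using htp_step.backtrack[OF e, where xs="[]" and ys=r2 and ind=ind] by simp
      have "homotopic G gl ind D (u#r) (u#r2)"
        using hom_trans[OF hp1 hom_Cons[OF p2(4)]] hb p2e \<open>y = u\<close>
        by (metis hom_trans homotopic_def r_into_equivclp)
      then show ?thesis using ep2 \<open>y = u\<close> mr2 NFp by auto
    next
      case False
      then have "stp l c = l # c" by (rule stp_nP)
      moreover have "edge_path G gl D (u#p1)" using e p1(1) r1 ep_Cons2 by simp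
      moreover have "mu G ori (u#p1) = l # mu G ori p1" using r1 l_def by simp
      moreover have "ceq (l # mu G ori p1) (l # c)" using ceq_Cons p1(4) c_def by blast
      ultimately show ?thesis using hp1 NFp by auto
    qed
  qed
qed

lemma main:
  assumes "edge_path G gl D p" "hd p = A" "edge_path G gl D q" "hd q = A"
    "raag_eq ind (mu G ori p) (mu G ori q)"
  shows "homotopic G gl ind D p q"
proof -
  obtain p1 where p1: "edge_path G gl D p1" "hd p1 = A" "homotopic G gl ind D p p1"
    "ceq (mu G ori p1) (NF (mu G ori p))" using path_lift[OF assms(1)] assms(2) by auto
  obtain q1 where q1: "edge_path G gl D q1" "hd q1 = A" "homotopic G gl ind D q q1"
    "ceq (mu G ori q1) (NF (mu G ori q))" using path_lift[OF assms(3)] assms(4) by auto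
  have "ceq (NF (mu G ori p)) (NF (mu G ori q))" using NF_eq[OF assms(5)] .
  then have "ceq (mu G ori p1) (mu G ori q1)"
    using ceq_trans[OF p1(4)] ceq_sym[OF q1(4)] ceq_trans by blast
  from lift_ceq[OF this p1(1)] obtain p2 where p2: "edge_path G gl D p2" "hd p2 = A"
    "mu G ori p2 = mu G ori q1" "homotopic G gl ind D p1 p2" using p1(2) by auto
  have "p2 = q1" using uniq[OF p2(1) q1(1)] p2 q1 by simp
  then have "homotopic G gl ind D p q1" using hom_trans[OF p1(3) p2(4)] by simp
  moreover have "homotopic G gl ind D q1 q" using q1(3) unfolding homotopic_def by (rule equivclp_sym)
  ultimately show ?thesis by (rule hom_trans)
qed

end

theorem theorem5p3:
  fixes G :: "('a, 'b) monoid_scheme" and gl :: "'a set" and ind :: "('a \<times> 'a) set"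
    and D :: "'a set" and ori :: "'a \<Rightarrow> 'a \<Rightarrow> bool" and A :: 'a
  assumes "group G"
    and "gliding_system G gl ind"
    and "\<exists>N::nat. \<forall>S. S \<subseteq> gl \<and> pairwise_indep ind S \<longrightarrow> finite S \<and> card S \<le> N"
    and "D \<subseteq> carrier G"
    and "regular_set G gl ind D"
    and "square_condition G ind D"
    and "orientation G gl ind D ori"
    and "A \<in> D"
  shows "\<forall>p q. edge_path G gl D p \<and> hd p = A \<and> last p = A \<and>
               edge_path G gl D q \<and> hd q = A \<and> last q = A \<and>
               raag_eq ind (mu G ori p) (mu G ori q)
           \<longrightarrow> homotopic G gl ind D p q"
proof -
  interpret gctx G gl ind D ori
    by (rule gctx.intro[OF assms(1)]) (unfold_locales; fact assms)+
  show ?thesis using main by blast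
qed

end
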